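(* Let $G=(V,E)$ be a finite connected graph with $n=|V|\ge 2$ vertices, distance matrix $D$, and diameter $L=\mathrm{diam}(G)$. Let $K\in\mathbb{R}_{\ge 0}^n$ be any solution of $DK=n\mathbf{1}_n$. Then $$\min_i K_i\cdot \mathrm{diam}(G)\le 2,$$ i.e. $\mathrm{diam}(G)\le 2/\min_iK_i$ whenever $\min_i K_i>0$. Moreover, if $\min_i K_i=2/L$, then $K_i=2/L$ for all $i$ (the solution is constant).
   Context: All graphs are finite, simple, connected and undirected, with the combinatorial shortest-path distance $d$. For $V=\{v_1,\dots,v_n\}$, $D=(d(v_i,v_j))_{i,j=1}^n$ is the distance matrix and $\mathbf{1}_n$ the all-ones column vector of length $n$. *)

theory Defs
  imports Complex_Main
begin

definition simple_graph :: "'a set \<Rightarrow> ('a \<Rightarrow> 'a \<Rightarrow> bool) \<Rightarrow> bool" where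
  "simple_graph V E \<longleftrightarrow> finite V \<and> (\<forall>u v. E u v \<longrightarrow> u \<in> V \<and> v \<in> V)
     \<and> (\<forall>u v. E u v \<longrightarrow> E v u) \<and> (\<forall>u. \<not> E u u)"

definition is_walk :: "'a set \<Rightarrow> ('a \<Rightarrow> 'a \<Rightarrow> bool) \<Rightarrow> 'a list \<Rightarrow> bool" where
  "is_walk V E xs \<longleftrightarrow> xs \<noteq> [] \<and> set xs \<subseteq> V \<and> (\<forall>i. Suc i < length xs \<longrightarrow> E (xs ! i) (xs ! Suc i))"

definition walk_of_len :: "'a set \<Rightarrow> ('a \<Rightarrow> 'a \<Rightarrow> bool) \<Rightarrow> 'a \<Rightarrow> 'a \<Rightarrow> nat \<Rightarrow> bool" where
  "walk_of_len V E u v k \<longleftrightarrow> (\<exists>xs. is_walk V E xs \<and> length xs = Suc k \<and> hd xs = u \<and> last xs = v)"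

definition connected_graph :: "'a set \<Rightarrow> ('a \<Rightarrow> 'a \<Rightarrow> bool) \<Rightarrow> bool" where
  "connected_graph V E \<longleftrightarrow> (\<forall>u\<in>V. \<forall>v\<in>V. \<exists>k. walk_of_len V E u v k)"

definition gdist :: "'a set \<Rightarrow> ('a \<Rightarrow> 'a \<Rightarrow> bool) \<Rightarrow> 'a \<Rightarrow> 'a \<Rightarrow> nat" where
  "gdist V E u v = (LEAST k. walk_of_len V E u v k)"

definition diam :: "'a set \<Rightarrow> ('a \<Rightarrow> 'a \<Rightarrow> bool) \<Rightarrow> nat" where
  "diam V E = Max {gdist V E u v | u v. u \<in> V \<and> v \<in> V}"

end

theory Submission
  imports Defs
begin

lemma walk_rev:
  assumes "simple_graph V E" "walk_of_len V E u v k"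
  shows "walk_of_len V E v u k"
proof -
  obtain xs where xs: "is_walk V E xs" "length xs = Suc k" "hd xs = u" "last xs = v"
    using assms(2) unfolding walk_of_len_def by blast
  have sym: "\<And>a b. E a b \<Longrightarrow> E b a" using assms(1) unfolding simple_graph_def by blast
  have "is_walk V E (rev xs)"
    unfolding is_walk_def
  proof (intro conjI allI impI)
    show "rev xs \<noteq> []" using xs by auto
    show "set (rev xs) \<subseteq> V" using xs unfolding is_walk_def by simp
    fix i assume i: "Suc i < length (rev xs)"
    have e: "E (xs ! (length xs - Suc (Suc i))) (xs ! Suc (length xs - Suc (Suc i)))"
      using xs(1) i unfolding is_walk_def by simp
    have "Suc (length xs - Suc (Suc i)) = length xs - Suc i" using i by simp
    then show "E (rev xs ! i) (rev xs ! Suc i)"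
      using e i sym by (simp add: rev_nth)
  qed
  moreover have "hd (rev xs) = v" "last (rev xs) = u" using xs
    by (auto simp: hd_rev last_rev)
  ultimately show ?thesis unfolding walk_of_len_def using xs by force
qed

lemma walk_app:
  assumes "walk_of_len V E u w a" "walk_of_len V E w v b"
  shows "walk_of_len V E u v (a + b)"
proof -
  obtain xs where xs: "is_walk V E xs" "length xs = Suc a" "hd xs = u" "last xs = w"
    using assms(1) unfolding walk_of_len_def by blast
  obtain ys where ys: "is_walk V E ys" "length ys = Suc b" "hd ys = w" "last ys = v"
    using assms(2) unfolding walk_of_len_def by blast
  define zs where "zs = xs @ tl ys"
  have len: "length zs = Suc (a + b)" using xs ys by (simp add: zs_def)
  have nth: "\<And>i. i < length zs \<Longrightarrow> zs ! i = (if i < length xs then xs ! i else ys ! (i - length xs + 1))"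
    using xs ys by (auto simp: zs_def nth_append nth_tl)
  have lastx: "xs ! a = w" using xs by (metis last_conv_nth diff_Suc_1 list.size(3) nat.distinct(1))
  have hdy: "ys ! 0 = w" using ys by (metis hd_conv_nth list.size(3) nat.distinct(1))
  have "is_walk V E zs"
    unfolding is_walk_def
  proof (intro conjI allI impI)
    show "zs \<noteq> []" using len by auto
    show "set zs \<subseteq> V" using xs ys unfolding is_walk_def zs_def
      by (auto dest: list.set_sel(2))
    fix i assume i: "Suc i < length zs"
    consider "Suc i < length xs" | "Suc i = length xs" | "Suc i > length xs" by linarith
    then show "E (zs ! i) (zs ! Suc i)"
    proof cases
      case 1 then show ?thesis using i nth xs(1) unfolding is_walk_def by simp
    next
      case 2
      then have "zs ! i = ys ! 0" "zs ! Suc i = ys ! Suc 0" using i nth lastx hdy xs(2) by auto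
      moreover have "Suc 0 < length ys" using i len xs(2) ys(2) 2 by simp
      ultimately show ?thesis using ys(1) unfolding is_walk_def by simp
    next
      case 3
      then have "zs ! i = ys ! (i - length xs + 1)" "zs ! Suc i = ys ! Suc (i - length xs + 1)"
      proof -
        have "Suc i - length xs + 1 = Suc (i - length xs + 1)" using 3 by simp
        then show "zs ! i = ys ! (i - length xs + 1)" "zs ! Suc i = ys ! Suc (i - length xs + 1)"
          using i nth[of i] nth[of "Suc i"] 3 by simp_all
      qed
      moreover have "Suc (i - length xs + 1) < length ys" using i len xs(2) ys(2) 3 by simp
      ultimately show ?thesis using ys(1) unfolding is_walk_def by simp
    qed
  qed
  moreover have "hd zs = u" using xs by (cases xs) (auto simp: zs_def)
  moreover have "last zs = v"
  proof (cases "tl ys = []")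
    case True
    then have "ys = [hd ys]" using ys by (metis list.collapse list.size(3) nat.distinct(1))
    then show ?thesis using True xs ys by (simp add: zs_def)
  next
    case False then show ?thesis using ys by (simp add: zs_def last_tl)
  qed
  ultimately show ?thesis unfolding walk_of_len_def using len by blast
qed

lemma gdist_walk:
  assumes "connected_graph V E" "u \<in> V" "v \<in> V"
  shows "walk_of_len V E u v (gdist V E u v)"
  using assms unfolding connected_graph_def gdist_def by (meson LeastI_ex)

lemma gdist_le:
  "walk_of_len V E u v k \<Longrightarrow> gdist V E u v \<le> k"
  unfolding gdist_def by (rule Least_le)

lemma gdist_tri:
  assumes "simple_graph V E" "connected_graph V E" "u \<in> V" "v \<in> V" "i \<in> V"
  shows "gdist V E u v \<le> gdist V E u i + gdist V E v i"
proof -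
  have "walk_of_len V E u v (gdist V E u i + gdist V E v i)"
    using walk_app[OF gdist_walk[OF assms(2,3,5)] walk_rev[OF assms(1) gdist_walk[OF assms(2,4,5)]]] .
  then show ?thesis by (rule gdist_le)
qed

lemma gdist_pos:
  assumes "connected_graph V E" "u \<in> V" "v \<in> V" "u \<noteq> v"
  shows "gdist V E u v > 0"
proof (rule ccontr)
  assume "\<not> ?thesis"
  then have "walk_of_len V E u v 0" using gdist_walk[OF assms(1-3)] by simp
  then obtain xs where "length xs = 1" "hd xs = u" "last xs = v" unfolding walk_of_len_def by auto
  then show False using assms(4) by (cases xs) auto
qed

theorem mainTheorem7:
  fixes V :: "'a set" and E :: "'a \<Rightarrow> 'a \<Rightarrow> bool" and K :: "'a \<Rightarrow> real"
  assumes "simple_graph V E" and "connected_graph V E" and "card V \<ge> 2"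
    and "\<forall>i\<in>V. K i \<ge> 0"
    and "\<forall>i\<in>V. (\<Sum>j\<in>V. real (gdist V E i j) * K j) = real (card V)"
  shows "(MIN i\<in>V. K i) * real (diam V E) \<le> 2
         \<and> ((MIN i\<in>V. K i) = 2 / real (diam V E) \<longrightarrow> (\<forall>i\<in>V. K i = 2 / real (diam V E)))"
proof -
  have fin: "finite V" using assms(1) unfolding simple_graph_def by blast
  have ne: "V \<noteq> {}" using assms(3) by auto
  define m where "m = (MIN i\<in>V. K i)"
  define L where "L = diam V E"
  define n where "n = card V"
  have mle: "\<And>i. i \<in> V \<Longrightarrow> m \<le> K i" using fin m_def by simp
  have m0: "m \<ge> 0" using fin ne assms(4) m_def by auto
  let ?S = "{gdist V E u v | u v. u \<in> V \<and> v \<in> V}"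
  have Sfin: "finite ?S"
  proof -
    have "?S = (\<lambda>(u,v). gdist V E u v) ` (V \<times> V)" by auto
    then show ?thesis using fin by simp
  qed
  have "L \<in> ?S" unfolding L_def diam_def using Sfin ne by (intro Max_in) auto
  then obtain u v where uv: "u \<in> V" "v \<in> V" "gdist V E u v = L" by blast
  obtain a b where ab: "a \<in> V" "b \<in> V" "a \<noteq> b"
    using assms(3) by (metis One_nat_def card_le_Suc0_iff_eq fin not_less_eq_eq numeral_2_eq_2)
  have "gdist V E a b \<le> L" unfolding L_def diam_def using Sfin ab by (intro Max_ge) auto
  then have Lpos: "L > 0" using gdist_pos[OF assms(2) ab] by simp
  have key: "real L * (\<Sum>i\<in>V. K i) \<le> 2 * real n"
  proof -
    have "real L * (\<Sum>i\<in>V. K i) = (\<Sum>i\<in>V. real L * K i)" by (simp add: sum_distrib_left)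
    also have "\<dots> \<le> (\<Sum>i\<in>V. (real (gdist V E u i) + real (gdist V E v i)) * K i)"
    proof (rule sum_mono)
      fix i assume i: "i \<in> V"
      have "real L \<le> real (gdist V E u i) + real (gdist V E v i)"
        using gdist_tri[OF assms(1,2) uv(1,2) i] uv(3) by simp
      then show "real L * K i \<le> (real (gdist V E u i) + real (gdist V E v i)) * K i"
        using assms(4) i by (simp add: mult_right_mono)
    qed
    also have "\<dots> = 2 * real n"
      using assms(5) uv(1,2) by (simp add: distrib_right sum.distrib n_def)
    finally show ?thesis .
  qed
  have sumge: "real n * m \<le> (\<Sum>i\<in>V. K i)"
  proof -
    have "(\<Sum>i\<in>V. m) \<le> (\<Sum>i\<in>V. K i)" using mle by (rule sum_mono)
    then show ?thesis by (simp add: n_def)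
  qed
  have npos: "real n > 0" using assms(3) n_def by simp
  have "real L * (real n * m) \<le> 2 * real n"
    using key sumge Lpos by (meson less_imp_le of_nat_0_le_iff mult_left_mono order_trans)
  then have "real n * (m * real L) \<le> real n * 2" by (simp add: algebra_simps)
  then have part1: "m * real L \<le> 2" using npos by simp
  have part2: "\<forall>i\<in>V. K i = 2 / real L" if eq: "m = 2 / real L"
  proof -
    have "(\<Sum>i\<in>V. K i - m) = (\<Sum>i\<in>V. K i) - real n * m" by (simp add: sum_subtractf n_def)
    also have "\<dots> \<le> 0"
    proof -
      have "real L * (\<Sum>i\<in>V. K i) \<le> real L * (real n * m)"
      proof -
        have Lm: "real L * m = 2" using eq Lpos by simp
        have "real L * (real n * m) = real n * (real L * m)" by (simp only: mult_ac)
        then have "real L * (real n * m) = 2 * real n" using Lm by simp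
        then show ?thesis using key by (simp only:)
      qed
      then have "(\<Sum>i\<in>V. K i) \<le> real n * m" using Lpos by (simp only: mult_le_cancel_left_pos of_nat_0_less_iff)
      then show ?thesis by simp
    qed
    finally have "(\<Sum>i\<in>V. K i - m) \<le> 0" .
    moreover have "\<forall>i\<in>V. 0 \<le> K i - m" using mle by simp
    ultimately have "(\<Sum>i\<in>V. K i - m) = 0" using sum_nonneg[of V "\<lambda>i. K i - m"] by simp
    then have "\<forall>i\<in>V. K i - m = 0"
      using sum_nonneg_eq_0_iff[OF fin, of "\<lambda>i. K i - m"] mle by simp
    then show ?thesis using eq by simp
  qed
  show ?thesis using part1 part2 unfolding m_def L_def by blast
qed

end
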